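(* Let $\mathbf{k}$ be a field of characteristic zero, let $(C^\bullet,\partial)$ be a complex of finite-dimensional $\mathbf{k}$-vector spaces of odd length $d=2r-1$ with a chirality operator $\Gamma$, and let $\mathcal B=\Gamma\partial+\partial\Gamma$. If $\mathcal B:C^\bullet\to C^\bullet$ is bijective, then the complex $(C^\bullet,\partial)$ is acyclic and $C^j=C^j_+\oplus C^j_-$ for all $j=0,\dots,d$, where $C^j_+=\operatorname{Ker}(\partial\circ\Gamma)\cap C^j$ and $C^j_-=\operatorname{Ker}\partial\cap C^j$.
   Context: A chirality operator is an involution $\Gamma:C^\bullet\to C^\bullet$ with $\Gamma(C^j)=C^{d-j}$ for all $j$. *)

theory Defs
  imports Complex_Main
begin

text \<open>A cochain complex C^0 -> ... -> C^d of finite-dimensional vector spaces over a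
  field, realised inside an ambient vector space V (with scalar multiplication scale)
  which is the internal direct sum of the subspaces C j, j = 0..d.  The differential
  and the chirality operator are linear endomorphisms of V (= C^bullet).\<close>

definition internal_direct_sum ::
  "('k::field \<Rightarrow> 'v::ab_group_add \<Rightarrow> 'v) \<Rightarrow> nat \<Rightarrow> (nat \<Rightarrow> 'v set) \<Rightarrow> bool" where
  "internal_direct_sum scale d C \<longleftrightarrow>
     (\<forall>j\<le>d. module.subspace scale (C j)) \<and>
     (\<forall>v. \<exists>!x. (\<forall>j\<le>d. x j \<in> C j) \<and> (\<forall>j>d. x j = 0) \<and> v = (\<Sum>j\<le>d. x j))"

definition fin_dim_subspace :: "('k::field \<Rightarrow> 'v::ab_group_add \<Rightarrow> 'v) \<Rightarrow> 'v set \<Rightarrow> bool" where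
  "fin_dim_subspace scale S \<longleftrightarrow> (\<exists>B. finite B \<and> module.span scale B = S)"

definition chirality_operator ::
  "nat \<Rightarrow> (nat \<Rightarrow> 'v set) \<Rightarrow> ('v \<Rightarrow> 'v) \<Rightarrow> bool" where
  "chirality_operator d C \<Gamma> \<longleftrightarrow> (\<forall>v. \<Gamma> (\<Gamma> v) = v) \<and> (\<forall>j\<le>d. \<Gamma> ` C j = C (d - j))"

definition acyclic_complex :: "nat \<Rightarrow> (nat \<Rightarrow> 'v::zero set) \<Rightarrow> ('v \<Rightarrow> 'v) \<Rightarrow> bool" where
  "acyclic_complex d C dlt \<longleftrightarrow>
     (\<forall>j\<le>d. {x \<in> C j. dlt x = 0} = (if j = 0 then {0} else dlt ` C (j - 1)))"

definition direct_sum_of :: "'v::ab_group_add set \<Rightarrow> 'v set \<Rightarrow> 'v set \<Rightarrow> bool" where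
  "direct_sum_of S A B \<longleftrightarrow> A \<inter> B = {0} \<and> {a + b | a b. a \<in> A \<and> b \<in> B} = S"

end

theory Submission
  imports Defs
begin

definition proj :: "nat \<Rightarrow> (nat \<Rightarrow> 'v::ab_group_add set) \<Rightarrow> nat \<Rightarrow> 'v \<Rightarrow> 'v" where
  "proj d C j v = (THE x. (\<forall>j\<le>d. x j \<in> C j) \<and> (\<forall>j>d. x j = 0) \<and> v = (\<Sum>j\<le>d. x j)) j"

lemma proj_unique:
  assumes "internal_direct_sum scale d C" "\<forall>j\<le>d. y j \<in> C j" "\<forall>j>d. y j = (0::'v::ab_group_add)"
    "v = sum y {..d}"
  shows "proj d C j v = y j"
proof -
  have "\<exists>!x. (\<forall>j\<le>d. x j \<in> C j) \<and> (\<forall>j>d. x j = 0) \<and> v = (\<Sum>j\<le>d. x j)"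
    using assms(1) unfolding internal_direct_sum_def by blast
  hence "(THE x. (\<forall>j\<le>d. x j \<in> C j) \<and> (\<forall>j>d. x j = 0) \<and> v = (\<Sum>j\<le>d. x j)) = y"
    by (rule the1_equality) (use assms(2-4) in auto)
  thus ?thesis unfolding proj_def by simp
qed

lemma proj_props:
  assumes "internal_direct_sum scale d C"
  shows "(\<forall>j\<le>d. proj d C j v \<in> C j) \<and> (\<forall>j>d. proj d C j v = (0::'v::ab_group_add))
     \<and> v = (\<Sum>j\<le>d. proj d C j v)"
proof -
  have "\<exists>!x. (\<forall>j\<le>d. x j \<in> C j) \<and> (\<forall>j>d. x j = 0) \<and> v = (\<Sum>j\<le>d. x j)"
    using assms(1) unfolding internal_direct_sum_def by blast
  from theI'[OF this] show ?thesis unfolding proj_def by blast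
qed

lemma zero_in:
  assumes "vector_space scale" "internal_direct_sum scale d C" "j \<le> d"
  shows "(0::'v::ab_group_add) \<in> C j"
proof -
  have "module scale" using assms(1) by (simp add: module_iff_vector_space)
  moreover have "module.subspace scale (C j)" using assms(2,3) unfolding internal_direct_sum_def by blast
  ultimately show ?thesis by (rule module.subspace_0)
qed

lemma add_in:
  assumes "vector_space scale" "internal_direct_sum scale d C" "j \<le> d" "x \<in> C j" "y \<in> C j"
  shows "x + (y::'v::ab_group_add) \<in> C j"
proof -
  have "module scale" using assms(1) by (simp add: module_iff_vector_space)
  moreover have "module.subspace scale (C j)" using assms(2,3) unfolding internal_direct_sum_def by blast
  ultimately show ?thesis using assms(4,5) by (rule module.subspace_add)
qed

lemma proj_in:
  assumes "vector_space scale" "internal_direct_sum scale d C" "k \<le> d" "v \<in> C k"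
  shows "proj d C j v = (if j = k then v else (0::'v::ab_group_add))"
  apply (rule proj_unique[OF assms(2)])
  using assms zero_in[OF assms(1,2)] by (auto simp: sum.delta)

lemma proj_add:
  assumes "vector_space scale" "internal_direct_sum scale d C"
  shows "proj d C j (u + w) = proj d C j u + proj d C j (w::'v::ab_group_add)"
  apply (rule proj_unique[OF assms(2)])
  using proj_props[OF assms(2), of u] proj_props[OF assms(2), of w] add_in[OF assms(1,2)]
  by (auto simp: sum.distrib)

theorem lemma5p1:
  fixes scale :: "'k::field_char_0 \<Rightarrow> 'v::ab_group_add \<Rightarrow> 'v"
    and r d :: nat and C :: "nat \<Rightarrow> 'v set" and dlt \<Gamma> :: "'v \<Rightarrow> 'v"
  assumes vs: "vector_space scale"
    and r: "r \<ge> 1" and d: "d = 2 * r - 1"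
    and dsum: "internal_direct_sum scale d C"
    and findim: "\<forall>j\<le>d. fin_dim_subspace scale (C j)"
    and lin_d: "Vector_Spaces.linear scale scale dlt"
    and deg_d: "\<forall>j<d. dlt ` C j \<subseteq> C (j + 1)"
    and top_d: "dlt ` C d \<subseteq> {0}"
    and dd: "\<forall>v. dlt (dlt v) = 0"
    and lin_G: "Vector_Spaces.linear scale scale \<Gamma>"
    and chir: "chirality_operator d C \<Gamma>"
    and B_bij: "bij (\<lambda>v. \<Gamma> (dlt v) + dlt (\<Gamma> v))"
  shows "acyclic_complex d C dlt \<and>
         (\<forall>j\<le>d. direct_sum_of (C j) {x \<in> C j. dlt (\<Gamma> x) = 0} {x \<in> C j. dlt x = 0})"
proof -
  define \<pi> where "\<pi> = proj d C"
  define B where "B = (\<lambda>v. \<Gamma> (dlt v) + dlt (\<Gamma> v))"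
  have hd: "module_hom scale scale dlt" using lin_d by (simp add: module_hom_iff_linear)
  have hG: "module_hom scale scale \<Gamma>" using lin_G by (simp add: module_hom_iff_linear)
  have d0[simp]: "dlt 0 = 0" using module_hom.zero[OF hd] .
  have G0[simp]: "\<Gamma> 0 = 0" using module_hom.zero[OF hG] .
  have GG[simp]: "\<Gamma> (\<Gamma> v) = v" for v using chir unfolding chirality_operator_def by blast
  have GC: "\<Gamma> ` C j = C (d - j)" if "j \<le> d" for j using chir that unfolding chirality_operator_def by blast
  have dsuc: "d = Suc (d - 1)" using r d by simp
  have dpos: "0 < d" using r d by simp
  have P: "(\<forall>j\<le>d. \<pi> j v \<in> C j) \<and> (\<forall>j>d. \<pi> j v = 0) \<and> v = (\<Sum>j\<le>d. \<pi> j v)" for v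
    unfolding \<pi>_def by (rule proj_props[OF dsum])
  have Pin: "\<pi> j v \<in> C j" if "j \<le> d" for j v using P that by blast
  have Pz: "\<pi> j v = 0" if "j > d" for j v using P that by blast
  have Psum: "v = (\<Sum>j\<le>d. \<pi> j v)" for v using P by blast
  have Pself: "\<pi> j v = v" if "j \<le> d" "v \<in> C j" for j v
    using proj_in[OF vs dsum that] unfolding \<pi>_def by simp
  have Padd: "\<pi> j (u + w) = \<pi> j u + \<pi> j w" for j u w
    unfolding \<pi>_def by (rule proj_add[OF vs dsum])
  have zin: "0 \<in> C j" if "j \<le> d" for j using zero_in[OF vs dsum that] .
  have dtop: "dlt (\<pi> d v) = 0" for v using top_d Pin[of d v] by auto
  have Pd: "\<pi> i (dlt v) = (if i = 0 then 0 else dlt (\<pi> (i - 1) v))" if "i \<le> d" for i v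
  proof -
    define y where "y = (\<lambda>i. if i = 0 \<or> i > d then 0 else dlt (\<pi> (i - 1) v))"
    have "\<pi> i (dlt v) = y i" unfolding \<pi>_def
    proof (rule proj_unique[OF dsum])
      show "\<forall>j\<le>d. y j \<in> C j"
      proof (intro allI impI)
        fix j assume j: "j \<le> d"
        show "y j \<in> C j"
        proof (cases "j = 0")
          case True thus ?thesis using zin j by (simp add: y_def)
        next
          case False
          hence "j - 1 < d" "j - 1 + 1 = j" using j by auto
          thus ?thesis using deg_d Pin[of "j - 1" v] False j unfolding y_def by force
        qed
      qed
      show "\<forall>j>d. y j = 0" by (simp add: y_def)
      have "dlt v = dlt (\<Sum>j\<le>d. \<pi> j v)" using Psum[of v] by simp
      also have "\<dots> = (\<Sum>j\<le>d. dlt (\<pi> j v))" by (rule module_hom.sum[OF hd])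
      also have "\<dots> = (\<Sum>j\<le>d - 1. dlt (\<pi> j v))"
        using dtop[of v] dpos by (subst dsuc, subst sum.atMost_Suc, simp)
      also have "\<dots> = (\<Sum>j\<le>d - 1. y (Suc j))"
        by (rule sum.cong) (use dpos in \<open>auto simp: y_def\<close>)
      also have "\<dots> = sum y {..d}"
        by (subst (2) dsuc, subst sum.atMost_Suc_shift, simp add: y_def)
      finally show "dlt v = sum y {..d}" .
    qed
    thus ?thesis using that by (simp add: y_def)
  qed
  have PG: "\<pi> k (\<Gamma> v) = \<Gamma> (\<pi> (d - k) v)" if "k \<le> d" for k v
  proof -
    define y where "y = (\<lambda>k. if k \<le> d then \<Gamma> (\<pi> (d - k) v) else 0)"
    have "\<pi> k (\<Gamma> v) = y k" unfolding \<pi>_def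
    proof (rule proj_unique[OF dsum])
      show "\<forall>j\<le>d. y j \<in> C j"
      proof (intro allI impI)
        fix j assume j: "j \<le> d"
        have "\<Gamma> (\<pi> (d - j) v) \<in> \<Gamma> ` C (d - j)" using Pin[of "d - j" v] by simp
        also have "\<dots> = C j" using GC[of "d - j"] j by simp
        finally show "y j \<in> C j" using j by (simp add: y_def)
      qed
      show "\<forall>j>d. y j = 0" by (simp add: y_def)
      have "\<Gamma> v = \<Gamma> (\<Sum>j\<le>d. \<pi> j v)" using Psum[of v] by simp
      also have "\<dots> = (\<Sum>j\<le>d. \<Gamma> (\<pi> j v))" by (rule module_hom.sum[OF hG])
      also have "\<dots> = sum y {..d}"
        by (rule sum.reindex_bij_witness[where i="\<lambda>i. d - i" and j="\<lambda>i. d - i"]) (auto simp: y_def)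
      finally show "\<Gamma> v = sum y {..d}" .
    qed
    thus ?thesis using that by (simp add: y_def)
  qed
  have B0: "B 0 = 0" by (simp add: B_def)
  have Binj: "x = y" if "B x = B y" for x y using B_bij that unfolding B_def bij_def inj_def by blast
  have Bsurj: "\<exists>y. x = B y" for x using B_bij unfolding B_def bij_def surj_def by blast
  have dB: "dlt (B y) = B (dlt y)" for y
    by (simp add: B_def module_hom.add[OF hd] dd)
  have ker: "x = dlt (\<Gamma> y)" if "dlt x = 0" "x = B y" for x y
  proof -
    have "B (dlt y) = B 0" using dB[of y] that B0 by simp
    hence "dlt y = 0" by (rule Binj)
    thus ?thesis using that by (simp add: B_def)
  qed
  have acyc: "acyclic_complex d C dlt"
    unfolding acyclic_complex_def
  proof (intro allI impI)
    fix j assume j: "j \<le> d"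
    show "{x \<in> C j. dlt x = 0} = (if j = 0 then {0} else dlt ` C (j - 1))"
    proof (intro equalityI subsetI)
      fix x assume x: "x \<in> {x \<in> C j. dlt x = 0}"
      obtain y where y: "x = B y" using Bsurj by blast
      have xe: "x = dlt (\<Gamma> y)" using ker[OF _ y] x by blast
      have "x = \<pi> j x" using Pself[OF j] x by simp
      also have "\<dots> = (if j = 0 then 0 else dlt (\<pi> (j - 1) (\<Gamma> y)))" using Pd[OF j] xe by simp
      finally show "x \<in> (if j = 0 then {0} else dlt ` C (j - 1))"
        using Pin[of "j - 1" "\<Gamma> y"] j by auto
    next
      fix x assume x: "x \<in> (if j = 0 then {0} else dlt ` C (j - 1))"
      show "x \<in> {x \<in> C j. dlt x = 0}"
      proof (cases "j = 0")
        case True thus ?thesis using x zin j by simp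
      next
        case False
        then obtain w where w: "w \<in> C (j - 1)" "x = dlt w" using x by auto
        have "j - 1 < d" "j - 1 + 1 = j" using j False by auto
        hence "x \<in> C j" using deg_d w by force
        thus ?thesis using w dd by simp
      qed
    qed
  qed
  have ds: "direct_sum_of (C j) {x \<in> C j. dlt (\<Gamma> x) = 0} {x \<in> C j. dlt x = 0}" if j: "j \<le> d" for j
    unfolding direct_sum_of_def
  proof (intro conjI)
    show "{x \<in> C j. dlt (\<Gamma> x) = 0} \<inter> {x \<in> C j. dlt x = 0} = {0}"
    proof (intro equalityI subsetI)
      fix x assume "x \<in> {x \<in> C j. dlt (\<Gamma> x) = 0} \<inter> {x \<in> C j. dlt x = 0}"
      hence "B x = B 0" by (simp add: B_def)
      thus "x \<in> {0}" using Binj by blast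
    next
      fix x :: 'v assume "x \<in> {0}" thus "x \<in> {x \<in> C j. dlt (\<Gamma> x) = 0} \<inter> {x \<in> C j. dlt x = 0}"
        using zin j by simp
    qed
    show "{a + b |a b. a \<in> {x \<in> C j. dlt (\<Gamma> x) = 0} \<and> b \<in> {x \<in> C j. dlt x = 0}} = C j"
    proof (intro equalityI subsetI)
      fix x assume "x \<in> {a + b |a b. a \<in> {x \<in> C j. dlt (\<Gamma> x) = 0} \<and> b \<in> {x \<in> C j. dlt x = 0}}"
      thus "x \<in> C j" using add_in[OF vs dsum j] by blast
    next
      fix x assume x: "x \<in> C j"
      obtain y where y: "x = B y" using Bsurj by blast
      define a where "a = \<pi> j (\<Gamma> (dlt y))"
      define b where "b = \<pi> j (dlt (\<Gamma> y))"
      have "x = \<pi> j x" using Pself[OF j x] by simp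
      also have "\<dots> = a + b" using y by (simp add: B_def Padd a_def b_def)
      finally have xab: "x = a + b" .
      have bk: "dlt b = 0" using Pd[OF j, of "\<Gamma> y"] dd unfolding b_def by simp
      have "\<Gamma> a = \<pi> (d - j) (dlt y)" unfolding a_def using PG[OF j] by simp
      hence ak: "dlt (\<Gamma> a) = 0" using Pd[of "d - j" y] dd by simp
      show "x \<in> {a + b |a b. a \<in> {x \<in> C j. dlt (\<Gamma> x) = 0} \<and> b \<in> {x \<in> C j. dlt x = 0}}"
        using xab ak bk Pin[OF j] a_def b_def by blast
    qed
  qed
  show ?thesis using acyc ds by blast
qed

end
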